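(* Let $(f_0, M_0, \Lambda_0, \mathcal{Q}_0)$ be a SIMDG with training distribution $P_{\mathrm{tr}}$, and let $q$, $R$, $\gamma_0$, $f_\star$ and identifiability be as in the context. Suppose that one of the following two conditions holds. (A) $\mathcal{G}$ is the class of linear functions $\mathbb{R}^p\to\mathbb{R}$ and $\mathcal{F}$ is the class of all measurable functions $\mathbb{R}^p\to\mathbb{R}$; under $P_{\mathrm{tr}}$, $Z$ takes values in a finite set $\mathcal{Z}\subseteq\mathbb{R}^r$ with $P_{\mathrm{tr}}(Z=z)>0$ for all $z\in\mathcal{Z}$, $\mathrm{E}_{P_{\mathrm{tr}}}[Z]=0$ and $\mathrm{E}_{P_{\mathrm{tr}}}[ZZ^\top]\succ 0$; $\gamma_0$ is linear; and there exist $z_1,\tilde z_1,\dots,z_q,\tilde z_q\in\mathcal{Z}$ such that for every $j\in\{1,\dots,q\}$ the distributions $P_{\mathrm{tr}}^{V+M_0 z_j}$ and $P_{\mathrm{tr}}^{V+M_0\tilde z_j}$ are not mutually singular, and $\mathrm{span}\{M_0(z_j-\tilde z_j): j=1,\dots,q\}=\mathrm{im}(M_0)$. (B) $\mathcal{F}$ and $\mathcal{G}$ are each the class of differentiable functions $\mathbb{R}^p\to\mathbb{R}$; the boundary of the support of $(V,Z)$ under $P_{\mathrm{tr}}$ has $P_{\mathrm{tr}}$-probability zero, and the interior of this support is convex; and $f_0$ and $\gamma_0$ are differentiable. Then the BCF $f_\star$ is identifiable from $P_{\mathrm{tr}}$ (with respect to the corresponding $\mathcal{F}$ and $\mathcal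{G}$).
   Context: Fix integers $p,r\ge 1$. A SIMDG is a tuple $(f_0, M_0, \Lambda_0, \mathcal{Q}_0)$ where $f_0:\mathbb{R}^p\to\mathbb{R}$ is measurable, $M_0\in\mathbb{R}^{p\times r}$, $\Lambda_0$ is a distribution on $\mathbb{R}^{1+p}$ such that $(U,V)\sim\Lambda_0$ satisfies $\mathrm{E}[(U,V)]=0$ and $\mathrm{E}[\|(U,V)\|_2^2]<\infty$, and $\mathcal{Q}_0$ is a set of distributions on $\mathbb{R}^r$. For each $Q\in\mathcal{Q}_0$ the model induces a distribution $P$ of $(U,V,X,Y,Z)$ by drawing $((U,V),Z)\sim\Lambda_0\otimes Q$ and setting $X = M_0 Z + V$, $Y = f_0(X)+U$; $\mathcal{P}_0$ is the set of all such induced distributions. Standing setting: $\sup_{P\in\mathcal{P}_0}\mathrm{E}_P[f_0(X)]^2<\infty$; $Q_{\mathrm{tr}}\in\mathcal{Q}_0$ satisfies $\mathrm{E}_{Q_{\mathrm{tr}}}[Z]=0$ and $\mathrm{E}_{Q_{\mathrm{tr}}}[ZZ^\top]\succ 0$; $P_{\mathrm{tr}}$ is the distribution induced by $Q_{\mathrm{tr}}$. $P_{\mathrm{tr}}^{W}$ denotes the distribution of a random variable $W$ under $P_{\mathrm{tr}}$. Let $q=\mathrm{rank}(M_0)$; if $q<p$, $R\in\mathbb{R}^{p\times(p-q)}$ has columns forming an orthonormal basis of $\ker(M_0^\top)$, and if $q=p$, $R$ is the zero vector in $\mathbb{R}^{p\times 1}$. $\gamma_0(v):=\mathrm{E}_{P_{\mathrm{tr}}}[U\mid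 V=v]$. The BCF is $f_\star(x):=f_0(x)+\mathrm{E}_{P_{\mathrm{tr}}}[\gamma_0(V)\mid R^\top X = R^\top x]$ for $P_{\mathrm{tr}}$-a.e. $x$. Identifiability: given classes $\mathcal{F},\mathcal{G}$ of measurable functions with $f_0\in\mathcal{F}$, $\gamma_0\in\mathcal{G}$, $f_\star$ is identifiable from $P_{\mathrm{tr}}$ if for all $f\in\mathcal{F}$, $\gamma\in\mathcal{G}$: whenever $\mathrm{E}_{P_{\mathrm{tr}}}[Y\mid X,V]=f(X)+\gamma(V)$ $P_{\mathrm{tr}}$-a.s., then $f_\star(X)=f(X)+\mathrm{E}_{P_{\mathrm{tr}}}[\gamma(V)\mid R^\top X]$ $P_{\mathrm{tr}}$-a.s. if $q<p$, and $f_\star(X)=f(X)+\mathrm{E}_{P_{\mathrm{tr}}}[\gamma(V)]$ $P_{\mathrm{tr}}$-a.s. if $q=p$. Two probability measures $\mu,\nu$ are mutually singular if there is a measurable $E$ with $\mu(E^c)=\nu(E)=0$. *)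

theory Defs
  imports "HOL-Probability.Probability"
begin

type_synonym ('p, 'r) obs = "real \<times> (real^'p) \<times> (real^'p) \<times> real \<times> (real^'r)"

definition obsU :: "('p::finite, 'r::finite) obs \<Rightarrow> real" where
  "obsU w = fst w"
definition obsV :: "('p::finite, 'r::finite) obs \<Rightarrow> real^'p" where
  "obsV w = fst (snd w)"
definition obsX :: "('p::finite, 'r::finite) obs \<Rightarrow> real^'p" where
  "obsX w = fst (snd (snd w))"
definition obsY :: "('p::finite, 'r::finite) obs \<Rightarrow> real" where
  "obsY w = fst (snd (snd (snd w)))"
definition obsZ :: "('p::finite, 'r::finite) obs \<Rightarrow> real^'r" where
  "obsZ w = snd (snd (snd (snd w)))"

text \<open>A SIMDG (f0, M0, Lambda0, Q0). Lambda0 is the law of (U,V), centred with finite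
  second moment; every Q in Q0 is a probability distribution on R^r.\<close>

definition is_SIMDG ::
  "(real^'p::finite \<Rightarrow> real) \<Rightarrow> real^'r::finite^'p \<Rightarrow> (real \<times> (real^'p)) measure
     \<Rightarrow> (real^'r) measure set \<Rightarrow> bool" where
  "is_SIMDG f0 M0 Lam Q0 \<longleftrightarrow>
     f0 \<in> borel_measurable borel \<and>
     prob_space Lam \<and> sets Lam = sets borel \<and>
     integrable Lam (\<lambda>w. w) \<and> integral\<^sup>L Lam (\<lambda>w. w) = 0 \<and>
     integrable Lam (\<lambda>w. norm w ^ 2) \<and>
     (\<forall>Q\<in>Q0. prob_space Q \<and> sets Q = sets borel)"

definition induced_dist ::
  "(real^'p::finite \<Rightarrow> real) \<Rightarrow> real^'r::finite^'p \<Rightarrow> (real \<times> (real^'p)) measure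
     \<Rightarrow> (real^'r) measure \<Rightarrow> ('p, 'r) obs measure" where
  "induced_dist f0 M0 Lam Q =
     distr (Lam \<Otimes>\<^sub>M Q) borel
       (\<lambda>((u, v), z). (u, v, M0 *v z + v, f0 (M0 *v z + v) + u, z))"

definition second_moment_matrix :: "(real^'r::finite) measure \<Rightarrow> real^'r^'r" where
  "second_moment_matrix Q = (\<chi> i j. \<integral>z. z $ i * z $ j \<partial>Q)"

definition pos_def_matrix :: "real^'n::finite^'n \<Rightarrow> bool" where
  "pos_def_matrix S \<longleftrightarrow> transpose S = S \<and> (\<forall>a. a \<noteq> 0 \<longrightarrow> a \<bullet> (S *v a) > 0)"

definition cond_exp_given ::
  "'a measure \<Rightarrow> ('a \<Rightarrow> 'b::topological_space) \<Rightarrow> ('a \<Rightarrow> real) \<Rightarrow> 'a \<Rightarrow> real" where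
  "cond_exp_given P W Y = real_cond_exp P (vimage_algebra (space P) W borel) Y"

definition mutually_singular :: "'a measure \<Rightarrow> 'a measure \<Rightarrow> bool" where
  "mutually_singular \<mu> \<nu> \<longleftrightarrow>
     (\<exists>E \<in> sets \<mu>. emeasure \<mu> (space \<mu> - E) = 0 \<and> emeasure \<nu> E = 0)"

definition measure_support :: "'a::topological_space measure \<Rightarrow> 'a set" where
  "measure_support \<mu> = {x. \<forall>A. open A \<longrightarrow> x \<in> A \<longrightarrow> emeasure \<mu> A > 0}"

definition is_gamma0 :: "('p::finite, 'r::finite) obs measure \<Rightarrow> (real^'p \<Rightarrow> real) \<Rightarrow> bool" where
  "is_gamma0 P g \<longleftrightarrow> g \<in> borel_measurable borel \<and>
     (AE w in P. g (obsV w) = cond_exp_given P obsV obsU w)"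

definition is_BCF ::
  "('p::finite, 'r::finite) obs measure \<Rightarrow> (real^'p \<Rightarrow> real) \<Rightarrow> (real^'p \<Rightarrow> real)
     \<Rightarrow> real^'k::finite^'p \<Rightarrow> (real^'p \<Rightarrow> real) \<Rightarrow> bool" where
  "is_BCF P f0 g0 R fs \<longleftrightarrow>
     (AE w in P. fs (obsX w) = f0 (obsX w)
        + cond_exp_given P (\<lambda>w. transpose R *v obsX w) (\<lambda>w. g0 (obsV w)) w)"

definition BCF_identifiable ::
  "('p::finite, 'r::finite) obs measure \<Rightarrow> real^'r^'p \<Rightarrow> real^'k::finite^'p
     \<Rightarrow> (real^'p \<Rightarrow> real) set \<Rightarrow> (real^'p \<Rightarrow> real) set
     \<Rightarrow> (real^'p \<Rightarrow> real) \<Rightarrow> bool" where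
  "BCF_identifiable P M0 R F G fs \<longleftrightarrow>
     (\<forall>f\<in>F. \<forall>g\<in>G.
        (AE w in P. cond_exp_given P (\<lambda>w. (obsX w, obsV w)) obsY w = f (obsX w) + g (obsV w))
        \<longrightarrow> (if rank M0 < CARD('p) then
               (AE w in P. fs (obsX w) = f (obsX w)
                  + cond_exp_given P (\<lambda>w. transpose R *v obsX w) (\<lambda>w. g (obsV w)) w)
             else
               (AE w in P. fs (obsX w) = f (obsX w) + (\<integral>w'. g (obsV w') \<partial>P))))"

definition valid_R :: "real^'r::finite^'p::finite \<Rightarrow> real^'k::finite^'p \<Rightarrow> bool" where
  "valid_R M0 R \<longleftrightarrow>
     (if rank M0 < CARD('p) then
        CARD('k) = CARD('p) - rank M0 \<and> transpose R ** R = mat 1 \<and>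
        span (columns R) = {v. transpose M0 *v v = 0}
      else CARD('k) = 1 \<and> R = 0)"

text \<open>Condition (A) of the proposition (P is the training distribution P_tr, q = rank M0).\<close>

definition condition_A ::
  "('p::finite, 'r::finite) obs measure \<Rightarrow> real^'r^'p \<Rightarrow> (real^'p \<Rightarrow> real) \<Rightarrow> bool" where
  "condition_A P M0 g0 \<longleftrightarrow>
     (\<exists>ZZ :: (real^'r) set. finite ZZ \<and>
        (AE w in P. obsZ w \<in> ZZ) \<and>
        (\<forall>z\<in>ZZ. measure P {w \<in> space P. obsZ w = z} > 0) \<and>
        linear g0 \<and>
        (\<exists>zs zs' :: nat \<Rightarrow> real^'r.
           (\<forall>j\<in>{1..rank M0}. zs j \<in> ZZ \<and> zs' j \<in> ZZ \<and>
              \<not> mutually_singular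
                  (distr P borel (\<lambda>w. obsV w + M0 *v zs j))
                  (distr P borel (\<lambda>w. obsV w + M0 *v zs' j))) \<and>
           span ((\<lambda>j. M0 *v (zs j - zs' j)) ` {1..rank M0}) = range (\<lambda>z. M0 *v z)))"

definition condition_B ::
  "('p::finite, 'r::finite) obs measure \<Rightarrow> (real^'p \<Rightarrow> real) \<Rightarrow> (real^'p \<Rightarrow> real) \<Rightarrow> bool" where
  "condition_B P f0 g0 \<longleftrightarrow>
     (let S = measure_support (distr P borel (\<lambda>w. (obsV w, obsZ w)))
      in measure P {w \<in> space P. (obsV w, obsZ w) \<in> frontier S} = 0 \<and>
         convex (interior S) \<and>
         (\<forall>x. f0 differentiable (at x)) \<and> (\<forall>x. g0 differentiable (at x)))"

definition differentiable_fns :: "(real^'p::finite \<Rightarrow> real) set" where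
  "differentiable_fns = {f. \<forall>x. f differentiable (at x)}"

end

theory Submission imports Defs begin

lemma mv_meas[measurable]: "(\<lambda>z. (M::real^'a::finite^'b::finite) *v z) \<in> borel_measurable borel"
  by (intro borel_measurable_continuous_onI linear_continuous_on matrix_vector_mul_bounded_linear)
lemma fst_bm[measurable]: "fst \<in> (borel :: ('a::second_countable_topology \<times> 'b::second_countable_topology) measure) \<rightarrow>\<^sub>M borel"
  by (intro borel_measurable_continuous_onI continuous_on_fst continuous_on_id)
lemma snd_bm[measurable]: "snd \<in> (borel :: ('a::second_countable_topology \<times> 'b::second_countable_topology) measure) \<rightarrow>\<^sub>M borel"
  by (intro borel_measurable_continuous_onI continuous_on_snd continuous_on_id)
lemma obs_meas[measurable]:
  "obsU \<in> (borel::('p::finite,'r::finite) obs measure) \<rightarrow>\<^sub>M borel"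
  "obsV \<in> (borel::('p::finite,'r::finite) obs measure) \<rightarrow>\<^sub>M borel"
  "obsX \<in> (borel::('p::finite,'r::finite) obs measure) \<rightarrow>\<^sub>M borel"
  "obsY \<in> (borel::('p::finite,'r::finite) obs measure) \<rightarrow>\<^sub>M borel"
  "obsZ \<in> (borel::('p::finite,'r::finite) obs measure) \<rightarrow>\<^sub>M borel"
  unfolding obsU_def[abs_def] obsV_def[abs_def] obsX_def[abs_def] obsY_def[abs_def] obsZ_def[abs_def]
  by measurable

lemma sigma_finite_subalgebra_vimage:
  assumes "prob_space P" and W: "W \<in> P \<rightarrow>\<^sub>M (borel::'b::topological_space measure)"
  shows "sigma_finite_subalgebra P (vimage_algebra (space P) W borel)"
proof -
  interpret prob_space P by fact
  have "subalgebra P (vimage_algebra (space P) W borel)"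
    unfolding subalgebra_def
  proof
    show "space (vimage_algebra (space P) W borel) = space P" by simp
    have "W \<in> space P \<rightarrow> space borel" by simp
    then show "sets (vimage_algebra (space P) W borel) \<subseteq> sets P"
      using W by (auto simp: sets_vimage_algebra2 measurable_sets)
  qed
  then have "finite_measure_subalgebra P (vimage_algebra (space P) W borel)"
    by (simp add: finite_measure_subalgebra_def finite_measure_subalgebra_axioms_def finite_measure_axioms)
  then show ?thesis by (rule finite_measure_subalgebra_is_sigma_finite)
qed

locale simsetup =
  fixes f0 :: "real^'p::finite \<Rightarrow> real" and M :: "real^'r::finite^'p"
    and L :: "(real \<times> (real^'p)) measure" and Q :: "(real^'r) measure"
    and g0 :: "real^'p \<Rightarrow> real"
  assumes f0m[measurable]: "f0 \<in> borel_measurable borel"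
    and Lprob: "prob_space L" and Lsets[measurable_cong]: "sets L = sets borel"
    and Lint: "integrable L (\<lambda>w. w)"
    and Qprob: "prob_space Q" and Qsets[measurable_cong]: "sets Q = sets borel"
    and f0sq: "integrable (induced_dist f0 M L Q) (\<lambda>w. (f0 (obsX w))\<^sup>2)"
    and gam: "is_gamma0 (induced_dist f0 M L Q) g0"
begin

abbreviation "N \<equiv> L \<Otimes>\<^sub>M Q"
abbreviation "P \<equiv> induced_dist f0 M L Q"
definition "T = (\<lambda>x::((real \<times> (real^'p)) \<times> (real^'r)). (fst (fst x), snd (fst x), M *v snd x + snd (fst x),
   f0 (M *v snd x + snd (fst x)) + fst (fst x), snd x))"

interpretation L: prob_space L by (rule Lprob)
interpretation Q: prob_space Q by (rule Qprob)
interpretation LQ: pair_prob_space L Q ..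

lemma Nsets[measurable_cong]: "sets N = sets borel"
  using sets_pair_measure_cong[OF Lsets Qsets] borel_prod by metis

lemma spaceN[simp]: "space N = UNIV"
  using sets_eq_imp_space_eq[OF Nsets] by simp
lemma spaceL[simp]: "space L = UNIV"
  using sets_eq_imp_space_eq[OF Lsets] by simp
lemma spaceQ[simp]: "space Q = UNIV"
  using sets_eq_imp_space_eq[OF Qsets] by simp

lemma T_meas[measurable]: "T \<in> N \<rightarrow>\<^sub>M borel"
  unfolding T_def by measurable

lemma P_eq: "P = distr N borel T"
  unfolding induced_dist_def T_def by (intro arg_cong[where f="distr N borel"]) (auto simp: fun_eq_iff)

lemma Psets[measurable_cong]: "sets P = sets borel"
  unfolding P_eq by simp
lemma spaceP[simp]: "space P = UNIV"
  unfolding P_eq by simp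

lemma Pprob: "prob_space P"
  unfolding P_eq by (intro prob_space.prob_space_distr LQ.prob_space_axioms T_meas)

interpretation P: prob_space P by (rule Pprob)

lemma obs_T[simp]:
  "obsU (T x) = fst (fst x)" "obsV (T x) = snd (fst x)" "obsX (T x) = M *v snd x + snd (fst x)"
  "obsY (T x) = f0 (M *v snd x + snd (fst x)) + fst (fst x)" "obsZ (T x) = snd x"
  by (simp_all add: T_def obsU_def obsV_def obsX_def obsY_def obsZ_def)

lemma AE_P_iff:
  assumes [measurable]: "Measurable.pred borel G"
  shows "(AE w in P. G w) \<longleftrightarrow> (AE x in N. G (T x))"
  unfolding P_eq by (rule AE_distr_iff) auto

lemma integral_P:
  fixes G :: "_ \<Rightarrow> real"
  assumes [measurable]: "G \<in> borel_measurable borel"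
  shows "integral\<^sup>L P G = (\<integral>x. G (T x) \<partial>N)"
  unfolding P_eq by (rule integral_distr) auto

lemma integrable_P:
  fixes G :: "_ \<Rightarrow> real"
  assumes [measurable]: "G \<in> borel_measurable borel"
  shows "integrable P G \<longleftrightarrow> integrable N (\<lambda>x. G (T x))"
  unfolding P_eq by (rule integrable_distr_eq) auto

lemma integral_N_fst:
  fixes G :: "_ \<Rightarrow> real"
  assumes [measurable]: "G \<in> borel_measurable borel"
  shows "(\<integral>x. G (fst x) \<partial>N) = integral\<^sup>L L G"
proof -
  have "integral\<^sup>L L G = integral\<^sup>L (distr N L fst) G" by (simp add: Q.distr_pair_fst[of L])
  also have "\<dots> = (\<integral>x. G (fst x) \<partial>N)" by (rule integral_distr) auto
  finally show ?thesis by simp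
qed

lemma integrable_N_fst:
  fixes G :: "_ \<Rightarrow> real"
  assumes [measurable]: "G \<in> borel_measurable borel"
  shows "integrable N (\<lambda>x. G (fst x)) \<longleftrightarrow> integrable L G"
proof -
  have "integrable L G = integrable (distr N L fst) G" by (simp add: Q.distr_pair_fst[of L])
  also have "\<dots> = integrable N (\<lambda>x. G (fst x))" by (rule integrable_distr_eq) auto
  finally show ?thesis by simp
qed

lemma g0m[measurable]: "g0 \<in> borel_measurable borel"
  using gam unfolding is_gamma0_def by simp

lemma intU: "integrable P obsU"
proof -
  have "integrable L fst"
    using integrable_bounded_linear[OF bounded_linear_fst Lint] by simp
  then show ?thesis
    by (subst integrable_P) (auto simp: integrable_N_fst[where G=fst, simplified])
qed

end

context simsetup begin
interpretation L: prob_space L by (rule Lprob)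
interpretation Q: prob_space Q by (rule Qprob)
interpretation LQ: pair_prob_space L Q ..
interpretation P: prob_space P by (rule Pprob)

lemma sfV: "sigma_finite_subalgebra P (vimage_algebra UNIV obsV borel)"
  using sigma_finite_subalgebra_vimage[OF Pprob, of obsV] by simp

lemma gam_ae: "AE w in P. g0 (obsV w) = real_cond_exp P (vimage_algebra UNIV obsV borel) obsU w"
  using gam unfolding is_gamma0_def cond_exp_given_def by simp

lemma int_g0V: "integrable P (\<lambda>w. g0 (obsV w))"
proof -
  interpret sigma_finite_subalgebra P "vimage_algebra UNIV obsV borel" by (rule sfV)
  show ?thesis
    using gam_ae real_cond_exp_int(1)[OF intU] by (subst integrable_cong_AE[where g="real_cond_exp P (vimage_algebra UNIV obsV borel) obsU"]) auto
qed

lemma int_g0L: "integrable L (\<lambda>x. g0 (snd x))"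
  using int_g0V by (subst (asm) integrable_P) (auto simp: integrable_N_fst[where G="\<lambda>x. g0 (snd x)", simplified])

lemma int_fstL: "integrable L fst"
  using integrable_bounded_linear[OF bounded_linear_fst Lint] by simp

lemma setint_L:
  assumes C[measurable]: "C \<in> sets borel"
  shows "(\<integral>x. indicator C (snd x) * fst x \<partial>L) = (\<integral>x. indicator C (snd x) * g0 (snd x) \<partial>L)"
proof -
  interpret sigma_finite_subalgebra P "vimage_algebra UNIV obsV borel" by (rule sfV)
  have A: "obsV -` C \<inter> UNIV \<in> sets (vimage_algebra UNIV obsV borel)"
    by (rule in_vimage_algebra) simp
  have ind: "\<And>w. indicator (obsV -` C \<inter> UNIV) w = (indicator C (obsV w) :: real)"
    by (simp add: indicator_def)
  have "(\<integral>w. indicator C (obsV w) * obsU w \<partial>P) = (\<integral>w. indicator C (obsV w) * real_cond_exp P (vimage_algebra UNIV obsV borel) obsU w \<partial>P)"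
    using real_cond_exp_intA[OF intU A] unfolding set_lebesgue_integral_def ind by simp
  also have "\<dots> = (\<integral>w. indicator C (obsV w) * g0 (obsV w) \<partial>P)"
    by (rule integral_cong_AE) (use gam_ae in auto)
  finally have eq: "(\<integral>w. indicator C (obsV w) * obsU w \<partial>P) = (\<integral>w. indicator C (obsV w) * g0 (obsV w) \<partial>P)" .
  have l: "(\<integral>w. indicator C (obsV w) * obsU w \<partial>P) = (\<integral>x. indicator C (snd x) * fst x \<partial>L)"
    by (subst integral_P) (auto simp: integral_N_fst[where G="\<lambda>x. indicator C (snd x) * fst x", simplified])
  have r: "(\<integral>w. indicator C (obsV w) * g0 (obsV w) \<partial>P) = (\<integral>x. indicator C (snd x) * g0 (snd x) \<partial>L)"
    by (subst integral_P) (auto simp: integral_N_fst[where G="\<lambda>x. indicator C (snd x) * g0 (snd x)", simplified])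
  show ?thesis using eq l r by simp
qed

lemma setint_N:
  assumes D[measurable]: "D \<in> sets borel"
  shows "(\<integral>x. indicator D (snd (fst x), snd x) * fst (fst x) \<partial>N) = (\<integral>x. indicator D (snd (fst x), snd x) * g0 (snd (fst x)) \<partial>N)"
proof -
  have iU: "integrable N (\<lambda>x. fst (fst x))"
    using int_fstL by (subst integrable_N_fst[where G=fst]) auto
  have iG: "integrable N (\<lambda>x. g0 (snd (fst x)))"
    using int_g0L by (subst integrable_N_fst[where G="\<lambda>x. g0 (snd x)"]) auto
  have S: "{x. (snd (fst x), snd x) \<in> D} \<in> sets N" by measurable
  have ind: "\<And>x. indicator {x. (snd (fst x), snd x) \<in> D} x = (indicator D (snd (fst x), snd x) :: real)"
    by (simp add: indicator_def)
  have i1: "integrable N (\<lambda>x. indicator D (snd (fst x), snd x) * fst (fst x))"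
    using integrable_mult_indicator[OF S iU] by (simp add: ind)
  have i2: "integrable N (\<lambda>x. indicator D (snd (fst x), snd x) * g0 (snd (fst x)))"
    using integrable_mult_indicator[OF S iG] by (simp add: ind)
  have "(\<integral>x. indicator D (snd (fst x), snd x) * fst (fst x) \<partial>N)
      = (\<integral>y. (\<integral>x. indicator D (snd x, y) * fst x \<partial>L) \<partial>Q)"
    using LQ.integral_snd[of "\<lambda>x y. indicator D (snd x, y) * fst x"] i1 by (simp add: split_beta')
  also have "\<dots> = (\<integral>y. (\<integral>x. indicator D (snd x, y) * g0 (snd x) \<partial>L) \<partial>Q)"
  proof (rule Bochner_Integration.integral_cong[OF refl])
    fix y :: "real^'r" assume "y \<in> space Q"
    have "(\<lambda>v::real^'p. (v, y)) \<in> borel_measurable borel" by measurable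
    from measurable_sets[OF this D] have C: "(\<lambda>v. (v, y)) -` D \<in> sets borel" by simp
    show "(\<integral>x. indicator D (snd x, y) * fst x \<partial>L) = (\<integral>x. indicator D (snd x, y) * g0 (snd x) \<partial>L)"
      using setint_L[OF C] by (simp add: indicator_def)
  qed
  also have "\<dots> = (\<integral>x. indicator D (snd (fst x), snd x) * g0 (snd (fst x)) \<partial>N)"
    using LQ.integral_snd[of "\<lambda>x y. indicator D (snd x, y) * g0 (snd x)"] i2 by (simp add: split_beta')
  finally show ?thesis .
qed

end

context simsetup begin
interpretation L: prob_space L by (rule Lprob)
interpretation Q: prob_space Q by (rule Qprob)
interpretation LQ: pair_prob_space L Q ..
interpretation P: prob_space P by (rule Pprob)

lemma int_f0X: "integrable P (\<lambda>w. f0 (obsX w))"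
  by (rule P.square_integrable_imp_integrable[OF _ f0sq]) simp

lemma AE_Y: "AE w in P. obsY w = f0 (obsX w) + obsU w"
  by (subst AE_P_iff) auto

lemma AE_X: "AE w in P. obsX w = M *v obsZ w + obsV w"
  by (subst AE_P_iff) auto

lemma intY: "integrable P obsY"
proof -
  have "integrable P (\<lambda>w. f0 (obsX w) + obsU w)" using int_f0X intU by simp
  then show ?thesis
    by (subst integrable_cong_AE[OF _ _ AE_Y]) auto
qed

abbreviation "FW \<equiv> vimage_algebra UNIV (\<lambda>w. (obsX w, obsV w)) (borel :: ((real^'p) \<times> (real^'p)) measure)"

lemma sfW: "sigma_finite_subalgebra P FW"
  using sigma_finite_subalgebra_vimage[OF Pprob, of "\<lambda>w. (obsX w, obsV w)"] by simp

lemma K1: "AE w in P. real_cond_exp P FW obsY w = f0 (obsX w) + g0 (obsV w)"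
proof -
  interpret sigma_finite_subalgebra P FW by (rule sfW)
  show ?thesis
  proof (rule real_cond_exp_charact)
    show "integrable P obsY" by (rule intY)
    show "integrable P (\<lambda>w. f0 (obsX w) + g0 (obsV w))" using int_f0X int_g0V by simp
    show "(\<lambda>w. f0 (obsX w) + g0 (obsV w)) \<in> borel_measurable FW"
    proof -
      have W1: "(\<lambda>w. (obsX w, obsV w)) \<in> FW \<rightarrow>\<^sub>M (borel :: ((real^'p) \<times> (real^'p)) measure)"
        by (rule measurable_vimage_algebra1) simp
      have G: "(\<lambda>y::(real^'p) \<times> (real^'p). f0 (fst y) + g0 (snd y)) \<in> borel_measurable borel"
        by measurable
      have "(\<lambda>w. (\<lambda>y::(real^'p) \<times> (real^'p). f0 (fst y) + g0 (snd y)) (obsX w, obsV w)) \<in> borel_measurable FW"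
        by (rule measurable_compose[OF W1 G])
      then show ?thesis by simp
    qed
    fix A :: "('p,'r) obs set" assume A: "A \<in> sets FW"
    then obtain B where B[measurable]: "B \<in> sets (borel :: ((real^'p) \<times> (real^'p)) measure)"
      and AB: "A = (\<lambda>w. (obsX w, obsV w)) -` B \<inter> UNIV"
      by (auto simp: sets_vimage_algebra2)
    have ind: "\<And>w. (indicator A w :: real) = indicator B (obsX w, obsV w)"
      by (simp add: AB indicator_def)
    define D where "D = {y::(real^'p) \<times> (real^'r). (M *v snd y + fst y, fst y) \<in> B}"
    have D[measurable]: "D \<in> sets borel" unfolding D_def by measurable
    have indD: "\<And>x. (indicator B (M *v snd x + snd (fst x), snd (fst x)) :: real) = indicator D (snd (fst x), snd x)"
      by (simp add: D_def indicator_def)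
    have Ue: "(\<integral>w. indicator B (obsX w, obsV w) * obsU w \<partial>P) = (\<integral>w. indicator B (obsX w, obsV w) * g0 (obsV w) \<partial>P)"
      using setint_N[OF D] by (simp add: integral_P indD)
    have iB: "{w. (obsX w, obsV w) \<in> B} \<in> sets P" by measurable
    have indB: "\<And>w. indicator {w. (obsX w, obsV w) \<in> B} w = (indicator B (obsX w, obsV w) :: real)"
      by (simp add: indicator_def)
    have i1: "integrable P (\<lambda>w. indicator B (obsX w, obsV w) * f0 (obsX w))"
      using integrable_mult_indicator[OF iB int_f0X] by (simp add: indB)
    have i2: "integrable P (\<lambda>w. indicator B (obsX w, obsV w) * obsU w)"
      using integrable_mult_indicator[OF iB intU] by (simp add: indB)
    have i3: "integrable P (\<lambda>w. indicator B (obsX w, obsV w) * g0 (obsV w))"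
      using integrable_mult_indicator[OF iB int_g0V] by (simp add: indB)
    have "(\<integral>w\<in>A. obsY w \<partial>P) = (\<integral>w. indicator B (obsX w, obsV w) * (f0 (obsX w) + obsU w) \<partial>P)"
      unfolding set_lebesgue_integral_def ind by (rule integral_cong_AE) (use AE_Y in auto)
    also have "\<dots> = (\<integral>w. indicator B (obsX w, obsV w) * f0 (obsX w) \<partial>P) + (\<integral>w. indicator B (obsX w, obsV w) * obsU w \<partial>P)"
      using i1 i2 by (simp add: distrib_left)
    also have "\<dots> = (\<integral>w. indicator B (obsX w, obsV w) * f0 (obsX w) \<partial>P) + (\<integral>w. indicator B (obsX w, obsV w) * g0 (obsV w) \<partial>P)"
      using Ue by simp
    also have "\<dots> = (\<integral>w. indicator B (obsX w, obsV w) * (f0 (obsX w) + g0 (obsV w)) \<partial>P)"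
      using i1 i3 by (simp add: distrib_left)
    also have "\<dots> = (\<integral>w\<in>A. (f0 (obsX w) + g0 (obsV w)) \<partial>P)"
      unfolding set_lebesgue_integral_def ind by simp
    finally show "(\<integral>w\<in>A. obsY w \<partial>P) = (\<integral>w\<in>A. (f0 (obsX w) + g0 (obsV w)) \<partial>P)" .
  qed
qed

lemma K2:
  assumes fm[measurable]: "f \<in> borel_measurable borel" and gm[measurable]: "g \<in> borel_measurable borel"
    and H: "AE w in P. cond_exp_given P (\<lambda>w. (obsX w, obsV w)) obsY w = f (obsX w) + g (obsV w)"
  shows "AE x in N. f0 (M *v snd x + snd (fst x)) - f (M *v snd x + snd (fst x)) = g (snd (fst x)) - g0 (snd (fst x))"
proof -
  have "AE w in P. f0 (obsX w) + g0 (obsV w) = f (obsX w) + g (obsV w)"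
    using H K1 unfolding cond_exp_given_def by auto
  then have "AE w in P. f0 (obsX w) - f (obsX w) = g (obsV w) - g0 (obsV w)"
    by eventually_elim simp
  then show ?thesis by (subst (asm) AE_P_iff) auto
qed

end


lemma real_cond_exp_add_meas:
  assumes "prob_space M" "sigma_finite_subalgebra M F"
    and ia: "integrable M a" and bF[measurable]: "b \<in> borel_measurable F"
  shows "AE x in M. real_cond_exp M F (\<lambda>x. a x + b x) x = real_cond_exp M F a x + b x"
proof -
  interpret prob_space M by fact
  interpret sigma_finite_subalgebra M F by fact
  have bM[measurable]: "b \<in> borel_measurable M" by (rule measurable_from_subalg[OF subalg bF])
  have aM[measurable]: "a \<in> borel_measurable M" using ia by auto
  have "\<forall>n::nat. AE x in M. \<bar>b x\<bar> \<le> real n \<longrightarrow>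
          real_cond_exp M F (\<lambda>x. a x + b x) x = real_cond_exp M F a x + b x"
  proof
    fix n :: nat
    have spF: "space F = space M" using subalg unfolding subalgebra_def by simp
    define A where "A = {x\<in>space M. \<bar>b x\<bar> \<le> real n}"
    have "{x\<in>space F. \<bar>b x\<bar> \<le> real n} \<in> sets F" by measurable
    then have AF[measurable]: "A \<in> sets F" unfolding A_def spF .
    have AM[measurable]: "A \<in> sets M" using AF subalg unfolding subalgebra_def by auto
    have iA: "integrable M (\<lambda>x. indicator A x * a x)"
      using integrable_mult_indicator[OF AM ia] by simp
    have iB: "integrable M (\<lambda>x. indicator A x * b x)"
    proof (rule integrable_const_bound[where B="real n"])
      show "AE x in M. norm (indicator A x * b x) \<le> real n"
        by (auto simp: A_def indicator_def)
    qed simp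
    have iAB: "integrable M (\<lambda>x. indicator A x * (a x + b x))"
      using iA iB by (simp add: distrib_left)
    have indF: "indicator A \<in> borel_measurable F" using AF by simp
    have e1: "AE x in M. real_cond_exp M F (\<lambda>x. indicator A x * (a x + b x)) x = indicator A x * real_cond_exp M F (\<lambda>x. a x + b x) x"
      by (rule real_cond_exp_mult[OF indF _ iAB]) simp
    have e2: "AE x in M. real_cond_exp M F (\<lambda>x. indicator A x * a x + indicator A x * b x) x
         = real_cond_exp M F (\<lambda>x. indicator A x * a x) x + real_cond_exp M F (\<lambda>x. indicator A x * b x) x"
      by (rule real_cond_exp_add[OF iA iB])
    have e3: "AE x in M. real_cond_exp M F (\<lambda>x. indicator A x * a x) x = indicator A x * real_cond_exp M F a x"
      by (rule real_cond_exp_mult[OF indF aM iA])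
    have e4: "AE x in M. real_cond_exp M F (\<lambda>x. indicator A x * b x) x = indicator A x * b x"
      by (rule real_cond_exp_F_meas[OF iB]) simp
    have fe: "(\<lambda>x. indicator A x * (a x + b x)) = (\<lambda>x. indicator A x * a x + indicator A x * b x)"
      by (simp add: fun_eq_iff distrib_left)
    show "AE x in M. \<bar>b x\<bar> \<le> real n \<longrightarrow>
          real_cond_exp M F (\<lambda>x. a x + b x) x = real_cond_exp M F a x + b x"
      using e1 e2 e3 e4 AE_space unfolding fe
    proof eventually_elim
      case (elim x)
      show ?case
      proof
        assume "\<bar>b x\<bar> \<le> real n"
        moreover have "x \<in> space M" using elim by simp
        ultimately have "x \<in> A" unfolding A_def by simp
        then show "real_cond_exp M F (\<lambda>x. a x + b x) x = real_cond_exp M F a x + b x"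
          using elim by simp
      qed
    qed
  qed
  then have "AE x in M. \<forall>n::nat. \<bar>b x\<bar> \<le> real n \<longrightarrow>
          real_cond_exp M F (\<lambda>x. a x + b x) x = real_cond_exp M F a x + b x"
    by (subst AE_all_countable) simp
  then show ?thesis
  proof eventually_elim
    case (elim x)
    obtain n :: nat where "\<bar>b x\<bar> \<le> real n" using real_arch_simple by blast
    then show ?case using elim by blast
  qed
qed


lemma vm_meas[measurable]: "(\<lambda>x. x v* (R::real^'a::finite^'b::finite)) \<in> borel_measurable borel"
proof -
  have "(\<lambda>x. transpose R *v x) \<in> borel_measurable borel" by (rule mv_meas)
  then show ?thesis by simp
qed

context simsetup begin
interpretation L: prob_space L by (rule Lprob)
interpretation Q: prob_space Q by (rule Qprob)
interpretation LQ: pair_prob_space L Q ..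
interpretation P: prob_space P by (rule Pprob)

lemma probP[simp]: "measure P UNIV = 1"
  using P.prob_space by simp

lemma Fin:
  fixes R :: "real^'k::finite^'p" and \<psi> :: "real^'k \<Rightarrow> real" and f g fs :: "real^'p \<Rightarrow> real"
  assumes fm[measurable]: "f \<in> borel_measurable borel" and gm[measurable]: "g \<in> borel_measurable borel"
    and psim[measurable]: "\<psi> \<in> borel_measurable borel"
    and BCF: "is_BCF P f0 g0 R fs"
    and H1: "AE x in N. f0 (M *v snd x + snd (fst x)) - f (M *v snd x + snd (fst x)) = \<psi> (transpose R *v (M *v snd x + snd (fst x)))"
    and H2: "AE x in N. g (snd (fst x)) - g0 (snd (fst x)) = \<psi> (transpose R *v (M *v snd x + snd (fst x)))"
  shows "AE w in P. fs (obsX w) = f (obsX w) + cond_exp_given P (\<lambda>w. transpose R *v obsX w) (\<lambda>w. g (obsV w)) w"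
proof -
  let ?G = "vimage_algebra UNIV (\<lambda>w. transpose R *v obsX w) (borel :: (real^'k) measure)"
  have sf: "sigma_finite_subalgebra P ?G"
    using sigma_finite_subalgebra_vimage[OF Pprob, of "\<lambda>w. transpose R *v obsX w"] by simp
  interpret sigma_finite_subalgebra P ?G by (rule sf)
  have h1: "AE w in P. f0 (obsX w) - f (obsX w) = \<psi> (transpose R *v obsX w)"
    using H1 by (subst AE_P_iff) auto
  have h2: "AE w in P. g (obsV w) = g0 (obsV w) + \<psi> (transpose R *v obsX w)"
    using H2 by (subst AE_P_iff) auto
  have psiG: "(\<lambda>w. \<psi> (transpose R *v obsX w)) \<in> borel_measurable ?G"
  proof -
    have W1: "(\<lambda>w. transpose R *v obsX w) \<in> ?G \<rightarrow>\<^sub>M (borel :: (real^'k) measure)"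
      by (rule measurable_vimage_algebra1) simp
    show ?thesis by (rule measurable_compose[OF W1 psim])
  qed
  have e1: "AE w in P. real_cond_exp P ?G (\<lambda>w. g (obsV w)) w = real_cond_exp P ?G (\<lambda>w. g0 (obsV w) + \<psi> (transpose R *v obsX w)) w"
    by (rule real_cond_exp_cong[OF h2]) auto
  have e2: "AE w in P. real_cond_exp P ?G (\<lambda>w. g0 (obsV w) + \<psi> (transpose R *v obsX w)) w = real_cond_exp P ?G (\<lambda>w. g0 (obsV w)) w + \<psi> (transpose R *v obsX w)"
    by (rule real_cond_exp_add_meas[OF Pprob sf int_g0V psiG])
  have b: "AE w in P. fs (obsX w) = f0 (obsX w) + real_cond_exp P ?G (\<lambda>w. g0 (obsV w)) w"
    using BCF unfolding is_BCF_def cond_exp_given_def by simp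
  show ?thesis
    using h1 e1 e2 b unfolding cond_exp_given_def spaceP by eventually_elim simp
qed

lemma Fin_full:
  fixes R :: "real^'k::finite^'p" and c :: real and f g fs :: "real^'p \<Rightarrow> real"
  assumes fm[measurable]: "f \<in> borel_measurable borel" and gm[measurable]: "g \<in> borel_measurable borel"
    and R0: "R = 0"
    and BCF: "is_BCF P f0 g0 R fs"
    and H1: "AE x in N. f0 (M *v snd x + snd (fst x)) - f (M *v snd x + snd (fst x)) = c"
    and H2: "AE x in N. g (snd (fst x)) - g0 (snd (fst x)) = c"
  shows "AE w in P. fs (obsX w) = f (obsX w) + (\<integral>w'. g (obsV w') \<partial>P)"
proof -
  let ?G = "vimage_algebra UNIV (\<lambda>w::('p,'r) obs. transpose R *v obsX w) (borel :: (real^'k) measure)"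
  have sf: "sigma_finite_subalgebra P ?G"
    using sigma_finite_subalgebra_vimage[OF Pprob, of "\<lambda>w. transpose R *v obsX w"] by simp
  interpret sigma_finite_subalgebra P ?G by (rule sf)
  have h1: "AE w in P. f0 (obsX w) - f (obsX w) = c"
    using H1 by (subst AE_P_iff) auto
  have h2: "AE w in P. g (obsV w) = g0 (obsV w) + c"
    using H2 by (subst AE_P_iff) auto
  have ig: "(\<integral>w'. g (obsV w') \<partial>P) = (\<integral>w'. g0 (obsV w') \<partial>P) + c"
  proof -
    have "(\<integral>w'. g (obsV w') \<partial>P) = (\<integral>w'. g0 (obsV w') + c \<partial>P)"
      by (rule integral_cong_AE) (use h2 in auto)
    also have "\<dots> = (\<integral>w'. g0 (obsV w') \<partial>P) + c"
      using int_g0V by (simp add: P.prob_space)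
    finally show ?thesis .
  qed
  have e: "AE w in P. real_cond_exp P ?G (\<lambda>w. g0 (obsV w)) w = (\<integral>w'. g0 (obsV w') \<partial>P)"
  proof (rule real_cond_exp_charact)
    fix A assume A: "A \<in> sets ?G"
    then obtain B where AB: "A = (\<lambda>w::('p,'r) obs. transpose R *v obsX w) -` B \<inter> UNIV"
      by (auto simp: sets_vimage_algebra2)
    then have "A = {} \<or> A = UNIV" using R0 by auto
    then show "(\<integral>w\<in>A. g0 (obsV w) \<partial>P) = (\<integral>w\<in>A. (\<integral>w'. g0 (obsV w') \<partial>P) \<partial>P)"
      by (auto simp: set_lebesgue_integral_def P.prob_space)
  qed (auto simp: int_g0V)
  have b: "AE w in P. fs (obsX w) = f0 (obsX w) + real_cond_exp P ?G (\<lambda>w. g0 (obsV w)) w"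
    using BCF unfolding is_BCF_def cond_exp_given_def by simp
  show ?thesis
    using h1 e b by eventually_elim (simp add: ig)
qed

end

lemma linear_rep:
  fixes k :: "real^'p::finite \<Rightarrow> real"
  assumes "linear k" shows "k x = adjoint k 1 \<bullet> x"
  using adjoint_works[OF assms, of x 1] by (simp add: inner_commute)

lemma lin0span: "linear (k::real^'p::finite \<Rightarrow> real) \<Longrightarrow> (\<And>x. x \<in> B \<Longrightarrow> k x = 0) \<Longrightarrow> x \<in> span B \<Longrightarrow> k x = 0"
  using linear_eq_0_on_span by blast

lemma range_full:
  fixes M :: "real^'r::finite^'p::finite"
  assumes "\<not> rank M < CARD('p)"
  shows "range (\<lambda>z. M *v z) = UNIV"
proof -
  have "rank M \<le> CARD('p)" unfolding rank_dim_range by (rule dim_subset_UNIV_cart)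
  with assms have "dim (range (\<lambda>z. M *v z)) = DIM(real^'p)" unfolding rank_dim_range by simp
  then have "span (range (\<lambda>z. M *v z)) = UNIV" using dim_eq_full[of "range (\<lambda>z. M *v z)"] by simp
  moreover have "subspace (range (\<lambda>z. M *v z))"
    by (rule linear_subspace_image[OF matrix_vector_mul_linear subspace_UNIV])
  ultimately show ?thesis by (metis span_eq_iff)
qed

lemma in_span_columns:
  fixes R :: "real^'k::finite^'p::finite"
  assumes "a \<in> span (columns R)" shows "\<exists>c. a = R *v c"
proof -
  have "subspace (range (\<lambda>c. R *v c))"
    by (rule linear_subspace_image[OF matrix_vector_mul_linear subspace_UNIV])
  moreover have "columns R \<subseteq> range (\<lambda>c. R *v c)"
    by (auto simp: columns_def matrix_vector_mult_basis[symmetric])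
  ultimately have "span (columns R) \<subseteq> range (\<lambda>c. R *v c)" by (rule span_minimal[rotated])
  with assms show ?thesis by auto
qed

lemma mv_inner: "(R *v c) \<bullet> x = c \<bullet> (transpose R *v x)" for R :: "real^'k::finite^'p::finite"
proof -
  have "c \<bullet> adjoint (\<lambda>x. R *v x) x = (R *v c) \<bullet> x" by (rule adjoint_works[OF matrix_vector_mul_linear])
  then show ?thesis unfolding adjoint_matrix by simp
qed


context simsetup begin
interpretation L: prob_space L by (rule Lprob)
interpretation Q: prob_space Q by (rule Qprob)
interpretation LQ: pair_prob_space L Q ..
interpretation P: prob_space P by (rule Pprob)

lemma emeasure_PZ: "emeasure P {w. obsZ w = z} = emeasure Q {z}"
proof -
  have "emeasure P {w. obsZ w = z} = emeasure N (T -` {w. obsZ w = z} \<inter> space N)"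
    unfolding P_eq by (rule emeasure_distr) auto
  also have "T -` {w. obsZ w = z} \<inter> space N = UNIV \<times> {z}" by auto
  also have "emeasure N (UNIV \<times> {z}) = emeasure L UNIV * emeasure Q {z}"
    by (rule Q.emeasure_pair_measure_Times) auto
  finally show ?thesis using L.emeasure_space_1 by simp
qed

lemma emeasure_distrV:
  assumes E[measurable]: "E \<in> sets borel"
  shows "emeasure (distr P borel (\<lambda>w. obsV w + M *v z)) E = emeasure L {x. snd x + M *v z \<in> E}"
proof -
  have "emeasure (distr P borel (\<lambda>w. obsV w + M *v z)) E = emeasure P ((\<lambda>w. obsV w + M *v z) -` E \<inter> space P)"
    by (rule emeasure_distr) (auto simp del: spaceP)
  also have "\<dots> = emeasure N (T -` ((\<lambda>w. obsV w + M *v z) -` E \<inter> space P) \<inter> space N)"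
  proof -
    have "(\<lambda>w. obsV w + M *v z) -` E \<inter> space P \<in> sets P" by (auto simp del: spaceP)
    then show ?thesis unfolding P_eq by (intro emeasure_distr) auto
  qed
  also have "T -` ((\<lambda>w. obsV w + M *v z) -` E \<inter> space P) \<inter> space N = {x. snd x + M *v z \<in> E} \<times> UNIV"
    by (rule set_eqI) (simp add: mem_Times_iff)
  also have "emeasure N ({x. snd x + M *v z \<in> E} \<times> UNIV) = emeasure L {x. snd x + M *v z \<in> E} * emeasure Q UNIV"
    by (rule Q.emeasure_pair_measure_Times) auto
  finally show ?thesis using Q.emeasure_space_1 by simp
qed

lemma slice_null:
  fixes h k :: "real^'p \<Rightarrow> real"
  assumes [measurable]: "h \<in> borel_measurable borel" "k \<in> borel_measurable borel"
    and K: "AE x in N. h (M *v snd x + snd (fst x)) = k (snd (fst x))"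
    and z0: "emeasure Q {z0} \<noteq> 0"
  shows "emeasure (distr P borel (\<lambda>w. obsV w + M *v z0)) (UNIV - {y. h y = k (y - M *v z0)}) = 0"
proof -
  define Bad :: "((real \<times> (real^'p)) \<times> (real^'r)) set" where "Bad = {x. h (M *v snd x + snd (fst x)) \<noteq> k (snd (fst x))}"
  have Bm: "Bad \<in> sets N" unfolding Bad_def by measurable
  have B0: "emeasure N Bad = 0"
    using K by (subst (asm) AE_iff_measurable[OF Bm]) (auto simp: Bad_def)
  define E0 :: "(real \<times> (real^'p)) set" where "E0 = {x. h (M *v z0 + snd x) \<noteq> k (snd x)}"
  have E0m: "E0 \<in> sets L" unfolding E0_def by measurable
  have "emeasure N (E0 \<times> {z0}) \<le> emeasure N Bad"
    by (rule emeasure_mono) (auto simp: E0_def Bad_def Bm)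
  moreover have "emeasure N (E0 \<times> {z0}) = emeasure L E0 * emeasure Q {z0}"
    by (rule Q.emeasure_pair_measure_Times) (auto simp: E0m)
  ultimately have "emeasure L E0 * emeasure Q {z0} = 0" using B0 by simp
  then have L0: "emeasure L E0 = 0" using z0 by simp
  have "UNIV - {y. h y = k (y - M *v z0)} \<in> sets borel" by measurable
  then have "emeasure (distr P borel (\<lambda>w. obsV w + M *v z0)) (UNIV - {y. h y = k (y - M *v z0)})
      = emeasure L {x. snd x + M *v z0 \<in> UNIV - {y. h y = k (y - M *v z0)}}"
    by (rule emeasure_distrV)
  also have "{x. snd x + M *v z0 \<in> UNIV - {y. h y = k (y - M *v z0)}} = E0"
    by (auto simp: E0_def add.commute)
  finally show ?thesis using L0 by simp
qed

end

context simsetup begin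
interpretation L: prob_space L by (rule Lprob)
interpretation Q: prob_space Q by (rule Qprob)
interpretation LQ: pair_prob_space L Q ..
interpretation P: prob_space P by (rule Pprob)

lemma caseA_k0:
  fixes f g :: "real^'p \<Rightarrow> real"
  assumes condA: "condition_A P M g0"
    and fm[measurable]: "f \<in> borel_measurable borel" and gl: "linear g"
    and K: "AE x in N. f0 (M *v snd x + snd (fst x)) - f (M *v snd x + snd (fst x)) = g (snd (fst x)) - g0 (snd (fst x))"
  shows "\<forall>z. g (M *v z) - g0 (M *v z) = 0"
proof -
  define h where "h = (\<lambda>y. f0 y - f y)"
  define k where "k = (\<lambda>v. g v - g0 v)"
  have g0l: "linear g0" using condA unfolding condition_A_def by blast
  have kl: "linear k" unfolding k_def using gl g0l by (rule linear_compose_sub)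
  have gm[measurable]: "g \<in> borel_measurable borel"
    by (intro borel_measurable_continuous_onI linear_continuous_on linear_conv_bounded_linear[THEN iffD1] gl)
  have hm[measurable]: "h \<in> borel_measurable borel" unfolding h_def by measurable
  have km[measurable]: "k \<in> borel_measurable borel" unfolding k_def by measurable
  have K': "AE x in N. h (M *v snd x + snd (fst x)) = k (snd (fst x))"
    using K unfolding h_def k_def .
  obtain ZZ zs zs' where ZZ: "\<forall>z\<in>ZZ. measure P {w \<in> space P. obsZ w = z} > 0"
    and J: "\<forall>j\<in>{1..rank M}. zs j \<in> ZZ \<and> zs' j \<in> ZZ \<and>
              \<not> mutually_singular
                  (distr P borel (\<lambda>w. obsV w + M *v zs j))
                  (distr P borel (\<lambda>w. obsV w + M *v zs' j))"
    and SP: "span ((\<lambda>j. M *v (zs j - zs' j)) ` {1..rank M}) = range (\<lambda>z. M *v z)"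
    using condA unfolding condition_A_def by blast
  have Qpos: "emeasure Q {z} \<noteq> 0" if "z \<in> ZZ" for z
  proof
    assume "emeasure Q {z} = 0"
    then have "emeasure P {w. obsZ w = z} = 0" by (simp add: emeasure_PZ)
    then have "measure P {w \<in> space P. obsZ w = z} = 0" by (simp add: measure_def)
    with ZZ that show False by auto
  qed
  have kz: "k (M *v (zs j - zs' j)) = 0" if j: "j \<in> {1..rank M}" for j
  proof -
    let ?E = "{y. h y = k (y - M *v zs j)}" and ?E' = "{y. h y = k (y - M *v zs' j)}"
    let ?\<mu> = "distr P borel (\<lambda>w. obsV w + M *v zs j)" and ?\<nu> = "distr P borel (\<lambda>w. obsV w + M *v zs' j)"
    have E[measurable]: "?E \<in> sets borel" by measurable
    have E'[measurable]: "?E' \<in> sets borel" by measurable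
    have m1: "emeasure ?\<mu> (UNIV - ?E) = 0" by (rule slice_null[OF hm km K' Qpos]) (use J j in auto)
    have m2: "emeasure ?\<nu> (UNIV - ?E') = 0" by (rule slice_null[OF hm km K' Qpos]) (use J j in auto)
    have ns: "\<not> mutually_singular ?\<mu> ?\<nu>" using J j by auto
    have nE: "emeasure ?\<nu> ?E \<noteq> 0"
    proof
      assume "emeasure ?\<nu> ?E = 0"
      then have "mutually_singular ?\<mu> ?\<nu>"
        unfolding mutually_singular_def using m1 E by (intro bexI[of _ ?E]) auto
      with ns show False by simp
    qed
    have "emeasure ?\<nu> ?E \<le> emeasure ?\<nu> ((?E \<inter> ?E') \<union> (UNIV - ?E'))"
      by (rule emeasure_mono) auto
    also have "\<dots> \<le> emeasure ?\<nu> (?E \<inter> ?E') + emeasure ?\<nu> (UNIV - ?E')"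
      by (rule emeasure_subadditive) auto
    finally have "emeasure ?\<nu> (?E \<inter> ?E') \<noteq> 0" using nE m2 by auto
    then have "?E \<inter> ?E' \<noteq> {}" by auto
    then obtain y where "h y = k (y - M *v zs j)" "h y = k (y - M *v zs' j)" by auto
    then have "k y - k (M *v zs j) = k y - k (M *v zs' j)" using linear_diff[OF kl] by metis
    then show ?thesis by (simp add: matrix_vector_mult_diff_distrib linear_diff[OF kl])
  qed
  show ?thesis
  proof
    fix z
    have mem: "M *v z \<in> span ((\<lambda>j. M *v (zs j - zs' j)) ` {1..rank M})" using SP by auto
    have "k (M *v z) = 0" by (rule lin0span[OF kl _ mem]) (use kz in auto)
    then show "g (M *v z) - g0 (M *v z) = 0" by (simp add: k_def)
  qed
qed

lemma caseA:
  fixes f g fs :: "real^'p \<Rightarrow> real" and R :: "real^'k::finite^'p"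
  assumes condA: "condition_A P M g0"
    and fm[measurable]: "f \<in> borel_measurable borel" and gl: "linear g"
    and H: "AE w in P. cond_exp_given P (\<lambda>w. (obsX w, obsV w)) obsY w = f (obsX w) + g (obsV w)"
    and vR: "valid_R M R" and BCF: "is_BCF P f0 g0 R fs"
  shows "if rank M < CARD('p) then
               (AE w in P. fs (obsX w) = f (obsX w)
                  + cond_exp_given P (\<lambda>w. transpose R *v obsX w) (\<lambda>w. g (obsV w)) w)
             else
               (AE w in P. fs (obsX w) = f (obsX w) + (\<integral>w'. g (obsV w') \<partial>P))"
proof -
  have g0l: "linear g0" using condA unfolding condition_A_def by blast
  have gm[measurable]: "g \<in> borel_measurable borel"
    by (intro borel_measurable_continuous_onI linear_continuous_on linear_conv_bounded_linear[THEN iffD1] gl)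
  have K: "AE x in N. f0 (M *v snd x + snd (fst x)) - f (M *v snd x + snd (fst x)) = g (snd (fst x)) - g0 (snd (fst x))"
    by (rule K2[OF fm gm H])
  have k0: "\<forall>z. g (M *v z) - g0 (M *v z) = 0" by (rule caseA_k0[OF condA fm gl K])
  define k where "k = (\<lambda>v. g v - g0 v)"
  have kl: "linear k" unfolding k_def using gl g0l by (rule linear_compose_sub)
  have k0': "\<And>z. k (M *v z) = 0" using k0 by (simp add: k_def)
  have kadd: "\<And>z v. k (M *v z + v) = k v" using linear_add[OF kl] k0' by simp
  show ?thesis
  proof (cases "rank M < CARD('p)")
    case True
    define a where "a = adjoint k 1"
    have ka: "\<And>x. k x = a \<bullet> x" unfolding a_def by (rule linear_rep[OF kl])
    have "(M *v (transpose M *v a)) \<bullet> a = (transpose M *v a) \<bullet> (transpose M *v a)"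
      by (rule mv_inner)
    moreover have "(M *v (transpose M *v a)) \<bullet> a = 0" using k0'[of "transpose M *v a"] ka by (simp add: inner_commute)
    ultimately have "transpose M *v a = 0" by simp
    moreover have "span (columns R) = {v. transpose M *v v = 0}" using vR True unfolding valid_R_def by simp
    ultimately have "a \<in> span (columns R)" by simp
    then obtain c where ac: "a = R *v c" using in_span_columns by blast
    define \<psi> where "\<psi> = (\<lambda>y. c \<bullet> y)"
    have psim[measurable]: "\<psi> \<in> borel_measurable borel" unfolding \<psi>_def
      by (intro borel_measurable_continuous_onI continuous_intros)
    have kpsi: "\<And>x. k x = \<psi> (transpose R *v x)" unfolding \<psi>_def using ka ac mv_inner by metis
    have H1: "AE x in N. f0 (M *v snd x + snd (fst x)) - f (M *v snd x + snd (fst x)) = \<psi> (transpose R *v (M *v snd x + snd (fst x)))"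
      using K by eventually_elim (metis k_def kadd kpsi)
    have H2: "AE x in N. g (snd (fst x)) - g0 (snd (fst x)) = \<psi> (transpose R *v (M *v snd x + snd (fst x)))"
      by (intro AE_I2) (metis k_def kadd kpsi)
    have "AE w in P. fs (obsX w) = f (obsX w) + cond_exp_given P (\<lambda>w. transpose R *v obsX w) (\<lambda>w. g (obsV w)) w"
      by (rule Fin[OF fm gm psim BCF H1 H2])
    then show ?thesis using True by simp
  next
    case False
    have R0: "R = 0" using vR False unfolding valid_R_def by simp
    have rf: "range (\<lambda>z. M *v z) = UNIV" by (rule range_full[OF False])
    have kz: "\<And>x. k x = 0"
    proof -
      fix x :: "real^'p"
      obtain z where "x = M *v z" using rf by (metis UNIV_I image_iff)
      then show "k x = 0" using k0' by simp
    qed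
    have H1: "AE x in N. f0 (M *v snd x + snd (fst x)) - f (M *v snd x + snd (fst x)) = 0"
      using K by eventually_elim (metis k_def kz)
    have H2: "AE x in N. g (snd (fst x)) - g0 (snd (fst x)) = 0"
      by (intro AE_I2) (metis k_def kz)
    have "AE w in P. fs (obsX w) = f (obsX w) + (\<integral>w'. g (obsV w') \<partial>P)"
      by (rule Fin_full[OF fm gm R0 BCF H1 H2])
    then show ?thesis using False by simp
  qed
qed

end

lemma supp_compl:
  fixes \<mu> :: "'a::second_countable_topology measure"
  assumes sets: "sets \<mu> = sets borel"
  shows "open (UNIV - measure_support \<mu>)" "emeasure \<mu> (UNIV - measure_support \<mu>) = 0"
proof -
  define F where "F = {A. open A \<and> emeasure \<mu> A = 0}"
  have eq: "UNIV - measure_support \<mu> = \<Union>F"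
  proof (intro set_eqI iffI)
    fix x assume "x \<in> UNIV - measure_support \<mu>"
    then obtain A where A: "open A" "x \<in> A" "\<not> 0 < emeasure \<mu> A" unfolding measure_support_def by blast
    then have "A \<in> F" unfolding F_def by simp
    with A(2) show "x \<in> \<Union>F" by blast
  next
    fix x assume "x \<in> \<Union>F"
    then obtain A where A: "A \<in> F" "x \<in> A" by blast
    then have "open A" "emeasure \<mu> A = 0" unfolding F_def by simp_all
    with A(2) show "x \<in> UNIV - measure_support \<mu>" unfolding measure_support_def by force
  qed
  obtain F' where F': "F' \<subseteq> F" "countable F'" "\<Union>F' = \<Union>F"
    using Lindelof[of F] unfolding F_def by blast
  show "open (UNIV - measure_support \<mu>)" unfolding eq F_def by (rule open_Union) simp
  have "(\<Union>A\<in>F'. A) \<in> null_sets \<mu>"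
  proof (rule null_sets_UN'[OF F'(2)])
    fix A assume "A \<in> F'"
    then have "open A" "emeasure \<mu> A = 0" using F'(1) by (auto simp: F_def)
    moreover have "A \<in> sets \<mu>" using sets \<open>open A\<close> by simp
    ultimately show "A \<in> null_sets \<mu>" by (simp add: null_sets_def)
  qed
  then have "\<Union>F' \<in> null_sets \<mu>" by simp
  then show "emeasure \<mu> (UNIV - measure_support \<mu>) = 0"
    unfolding eq F'(3)[symmetric] by (rule null_setsD1)
qed



lemma const_on_line:
  fixes h :: "real^'p::finite \<Rightarrow> real" and M :: "real^'r::finite^'p"
  assumes conv: "convex Ob"
    and loc: "\<forall>x\<in>Ob. \<exists>e>0. \<forall>w. norm w < e \<longrightarrow> h (x + M *v w) = h x"
    and x1: "x1 \<in> Ob" and x2: "x1 + M *v d \<in> Ob"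
  shows "h (x1 + M *v d) = h x1"
proof -
  define f where "f = (\<lambda>t::real. h (x1 + t *\<^sub>R (M *v d)))"
  have "f 0 = f 1"
  proof (rule connected_local_const[of "{0..1}" 0 1 f])
    show "\<forall>t\<in>{0..1}. eventually (\<lambda>s. f t = f s) (at t within {0..1})"
    proof
      fix t :: real assume t: "t \<in> {0..1}"
      have "(1 - t) *\<^sub>R x1 + t *\<^sub>R (x1 + M *v d) \<in> Ob"
        by (rule convexD[OF conv x1 x2]) (use t in auto)
      moreover have "(1 - t) *\<^sub>R x1 + t *\<^sub>R (x1 + M *v d) = x1 + t *\<^sub>R (M *v d)"
        by (simp add: algebra_simps)
      ultimately have yO: "x1 + t *\<^sub>R (M *v d) \<in> Ob" by simp
      then obtain e where e: "e > 0" "\<And>w. norm w < e \<Longrightarrow> h (x1 + t *\<^sub>R (M *v d) + M *v w) = h (x1 + t *\<^sub>R (M *v d))"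
        using loc by blast
      have np: "norm d + 1 > 0" by (simp add: add_nonneg_pos)
      have d0: "e / (norm d + 1) > 0" using e(1) np by (rule divide_pos_pos)
      show "eventually (\<lambda>s. f t = f s) (at t within {0..1})"
        unfolding eventually_at
      proof (intro exI[of _ "e / (norm d + 1)"] conjI ballI impI d0)
        fix s assume "s \<in> {0..1}" "s \<noteq> t \<and> dist s t < e / (norm d + 1)"
        then have st: "\<bar>s - t\<bar> * (norm d + 1) < e" by (simp add: dist_real_def pos_less_divide_eq[OF np])
        have "norm ((s - t) *\<^sub>R d) = \<bar>s - t\<bar> * norm d" by simp
        also have "\<dots> \<le> \<bar>s - t\<bar> * (norm d + 1)" by (simp add: mult_left_mono)
        finally have nw: "norm ((s - t) *\<^sub>R d) < e" using st by simp
        have "x1 + s *\<^sub>R (M *v d) = x1 + t *\<^sub>R (M *v d) + M *v ((s - t) *\<^sub>R d)"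
          by (simp add: algebra_simps matrix_vector_mult_scaleR)
        then show "f t = f s" unfolding f_def using e(2)[OF nw] by (metis add.assoc)
      qed
    qed
  qed auto
  then show ?thesis unfolding f_def by simp
qed



lemma ker_in_range:
  fixes M :: "real^'r::finite^'p::finite" and R :: "real^'k::finite^'p"
  assumes sp: "span (columns R) = {v. transpose M *v v = 0}" and d: "transpose R *v d = 0"
  shows "\<exists>w. d = M *v w"
proof -
  obtain y z where y: "y \<in> span (range (\<lambda>w. M *v w))"
    and z: "\<And>u. u \<in> span (range (\<lambda>w. M *v w)) \<Longrightarrow> orthogonal z u" and dyz: "d = y + z"
    using orthogonal_subspace_decomp_exists[of "range (\<lambda>w. M *v w)" d] by blast
  have sub: "subspace (range (\<lambda>w. M *v w))"
    by (rule linear_subspace_image[OF matrix_vector_mul_linear subspace_UNIV])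
  have "orthogonal z (M *v (transpose M *v z))" by (rule z) (simp add: span_base)
  then have "(M *v (transpose M *v z)) \<bullet> z = 0" by (simp add: orthogonal_def inner_commute)
  then have "(transpose M *v z) \<bullet> (transpose M *v z) = 0" by (simp add: mv_inner)
  then have "transpose M *v z = 0" by simp
  then have zs: "z \<in> span (columns R)" using sp by simp
  have "\<And>i. column i R \<bullet> d = 0"
  proof -
    fix i
    have "(R *v axis i 1) \<bullet> d = axis i 1 \<bullet> (transpose R *v d)" by (rule mv_inner)
    then show "column i R \<bullet> d = 0" using d by (simp add: matrix_vector_mult_basis)
  qed
  then have "\<And>u. u \<in> columns R \<Longrightarrow> d \<bullet> u = 0" by (auto simp: columns_def inner_commute)
  then have dz: "d \<bullet> z = 0"
    using lin0span[of "\<lambda>u. d \<bullet> u" "columns R" z] zs by (auto intro: bounded_linear.linear[OF bounded_linear_inner_right])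
  have yz: "z \<bullet> y = 0" using z[OF y] by (simp add: orthogonal_def)
  have "z \<bullet> z = z \<bullet> d - z \<bullet> y" by (simp add: dyz inner_add_right)
  also have "\<dots> = 0" using dz yz by (simp add: inner_commute)
  finally have "z \<bullet> z = 0" .
  then have "z = 0" by simp
  then have "d \<in> range (\<lambda>w. M *v w)" using y dyz sub by (simp add: span_eq_iff[THEN iffD2])
  then show ?thesis by auto
qed




context simsetup begin
interpretation L: prob_space L by (rule Lprob)
interpretation Q: prob_space Q by (rule Qprob)
interpretation LQ: pair_prob_space L Q ..
interpretation P: prob_space P by (rule Pprob)

lemma emeasure_PVZ:
  assumes A[measurable]: "A \<in> sets borel"
  shows "emeasure (distr P borel (\<lambda>w. (obsV w, obsZ w))) A = emeasure N {x. (snd (fst x), snd x) \<in> A}"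
proof -
  have "emeasure (distr P borel (\<lambda>w. (obsV w, obsZ w))) A = emeasure P ((\<lambda>w. (obsV w, obsZ w)) -` A \<inter> space P)"
    by (rule emeasure_distr) (auto simp del: spaceP)
  also have "\<dots> = emeasure N (T -` ((\<lambda>w. (obsV w, obsZ w)) -` A \<inter> space P) \<inter> space N)"
  proof -
    have "(\<lambda>w. (obsV w, obsZ w)) -` A \<inter> space P \<in> sets P" by (auto simp del: spaceP)
    then show ?thesis unfolding P_eq by (intro emeasure_distr) auto
  qed
  also have "T -` ((\<lambda>w. (obsV w, obsZ w)) -` A \<inter> space P) \<inter> space N = {x. (snd (fst x), snd x) \<in> A}"
    by (rule set_eqI) simp
  finally show ?thesis .
qed

lemma AE_D:
  defines "S \<equiv> measure_support (distr P borel (\<lambda>w. (obsV w, obsZ w)))"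
  assumes fr: "measure P {w \<in> space P. (obsV w, obsZ w) \<in> frontier S} = 0"
  shows "AE x in N. (snd (fst x), snd x) \<in> interior S"
proof -
  let ?\<mu> = "distr P borel (\<lambda>w. (obsV w, obsZ w))"
  have sm: "sets ?\<mu> = sets borel" by simp
  have o1: "open (UNIV - S)" and n1: "emeasure ?\<mu> (UNIV - S) = 0"
    using supp_compl[OF sm] unfolding S_def by auto
  have c2: "closed (frontier S)" by simp
  have B1[measurable]: "UNIV - S \<in> sets borel" using o1 by simp
  have B2[measurable]: "frontier S \<in> sets borel" using c2 by simp
  have "emeasure P {w. (obsV w, obsZ w) \<in> frontier S} = ennreal (measure P {w. (obsV w, obsZ w) \<in> frontier S})"
    by (rule P.emeasure_eq_measure)
  then have "emeasure P {w. (obsV w, obsZ w) \<in> frontier S} = 0" using fr by simp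
  moreover have "emeasure ?\<mu> (frontier S) = emeasure P ((\<lambda>w. (obsV w, obsZ w)) -` frontier S \<inter> space P)"
    by (rule emeasure_distr) (auto simp del: spaceP)
  ultimately have n2: "emeasure ?\<mu> (frontier S) = 0" by (simp add: vimage_def)
  have "emeasure ?\<mu> ((UNIV - S) \<union> frontier S) \<le> emeasure ?\<mu> (UNIV - S) + emeasure ?\<mu> (frontier S)"
    by (rule emeasure_subadditive) auto
  then have "emeasure ?\<mu> ((UNIV - S) \<union> frontier S) = 0" using n1 n2 by simp
  then have n3: "emeasure N {x. (snd (fst x), snd x) \<in> (UNIV - S) \<union> frontier S} = 0"
    using emeasure_PVZ[of "(UNIV - S) \<union> frontier S"] by simp
  have m3: "{x. (snd (fst x), snd x) \<in> (UNIV - S) \<union> frontier S} \<in> sets N" by measurable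
  show ?thesis
  proof (rule AE_I')
    show "{x. (snd (fst x), snd x) \<in> (UNIV - S) \<union> frontier S} \<in> null_sets N"
      using n3 m3 by (simp add: null_sets_def)
    show "{x \<in> space N. (snd (fst x), snd x) \<notin> interior S} \<subseteq> {x. (snd (fst x), snd x) \<in> (UNIV - S) \<union> frontier S}"
      using closure_subset[of S] by (auto simp: frontier_def)
  qed
qed

lemma eq_on_D:
  fixes h k :: "real^'p \<Rightarrow> real"
  defines "S \<equiv> measure_support (distr P borel (\<lambda>w. (obsV w, obsZ w)))"
  assumes hc: "continuous_on UNIV h" and kc: "continuous_on UNIV k"
    and hm[measurable]: "h \<in> borel_measurable borel" and km[measurable]: "k \<in> borel_measurable borel"
    and K: "AE x in N. h (M *v snd x + snd (fst x)) = k (snd (fst x))"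
    and vz: "(v, z) \<in> interior S"
  shows "h (M *v z + v) = k v"
proof (rule ccontr)
  assume ne: "h (M *v z + v) \<noteq> k v"
  let ?\<mu> = "distr P borel (\<lambda>w. (obsV w, obsZ w))"
  define U where "U = interior S \<inter> {p. h (M *v snd p + fst p) \<noteq> k (fst p)}"
  have lc: "continuous_on UNIV (\<lambda>p::(real^'p) \<times> (real^'r). M *v snd p + fst p)"
    by (intro continuous_on_add continuous_on_fst continuous_on_id linear_continuous_on
        bounded_linear_compose[OF matrix_vector_mul_bounded_linear bounded_linear_snd])
  have "continuous_on UNIV (\<lambda>p::(real^'p) \<times> (real^'r). h (M *v snd p + fst p))"
    by (rule continuous_on_compose2[OF hc lc]) auto
  moreover have "continuous_on UNIV (\<lambda>p::(real^'p) \<times> (real^'r). k (fst p))"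
    by (intro continuous_on_compose2[OF kc] continuous_intros) auto
  ultimately have "open {p::(real^'p) \<times> (real^'r). h (M *v snd p + fst p) \<noteq> k (fst p)}"
    by (rule open_Collect_neq)
  then have oU: "open U" unfolding U_def by auto
  have "(v, z) \<in> U" using vz ne unfolding U_def by simp
  moreover have "(v, z) \<in> S" using vz interior_subset by blast
  ultimately have pos: "emeasure ?\<mu> U > 0" using oU unfolding S_def measure_support_def by blast
  have Um[measurable]: "U \<in> sets borel" using oU by simp
  have "emeasure ?\<mu> U = emeasure N {x. (snd (fst x), snd x) \<in> U}" by (rule emeasure_PVZ[OF Um])
  also have "\<dots> \<le> emeasure N {x. h (M *v snd x + snd (fst x)) \<noteq> k (snd (fst x))}"
    by (rule emeasure_mono) (auto simp: U_def)
  also have "\<dots> = 0"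
  proof -
    have m: "{x. h (M *v snd x + snd (fst x)) \<noteq> k (snd (fst x))} \<in> sets N"
      by measurable
    show ?thesis using K by (subst (asm) AE_iff_measurable[OF m]) auto
  qed
  finally show False using pos by simp
qed

end




lemma diffcont: "f \<in> differentiable_fns \<Longrightarrow> continuous_on UNIV f"
  unfolding differentiable_fns_def
  by (auto intro!: continuous_at_imp_continuous_on differentiable_imp_continuous_within)

lemma open_vim: "continuous_on UNIV h \<Longrightarrow> open B \<Longrightarrow> open (h -` B)"
  using continuous_on_open_vimage[OF open_UNIV, of h] by auto

context simsetup begin
interpretation L: prob_space L by (rule Lprob)
interpretation Q: prob_space Q by (rule Qprob)
interpretation LQ: pair_prob_space L Q ..
interpretation P: prob_space P by (rule Pprob)

lemma caseB:
  fixes f g fs :: "real^'p \<Rightarrow> real" and R :: "real^'k::finite^'p"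
  assumes condB: "condition_B P f0 g0"
    and fd: "f \<in> differentiable_fns" and gd: "g \<in> differentiable_fns"
    and H: "AE w in P. cond_exp_given P (\<lambda>w. (obsX w, obsV w)) obsY w = f (obsX w) + g (obsV w)"
    and vR: "valid_R M R" and BCF: "is_BCF P f0 g0 R fs"
  shows "if rank M < CARD('p) then
               (AE w in P. fs (obsX w) = f (obsX w)
                  + cond_exp_given P (\<lambda>w. transpose R *v obsX w) (\<lambda>w. g (obsV w)) w)
             else
               (AE w in P. fs (obsX w) = f (obsX w) + (\<integral>w'. g (obsV w') \<partial>P))"
proof -
  define S where "S = measure_support (distr P borel (\<lambda>w. (obsV w, obsZ w)))"
  define D where "D = interior S"
  have fr: "measure P {w \<in> space P. (obsV w, obsZ w) \<in> frontier S} = 0" and cD: "convex D"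
    and f0d: "\<forall>x. f0 differentiable (at x)" and g0d: "\<forall>x. g0 differentiable (at x)"
    using condB unfolding condition_B_def Let_def S_def D_def by auto
  have fc: "continuous_on UNIV f" by (rule diffcont[OF fd])
  have gc: "continuous_on UNIV g" by (rule diffcont[OF gd])
  have f0c: "continuous_on UNIV f0" by (rule diffcont) (use f0d in \<open>simp add: differentiable_fns_def\<close>)
  have g0c: "continuous_on UNIV g0" by (rule diffcont) (use g0d in \<open>simp add: differentiable_fns_def\<close>)
  have fm[measurable]: "f \<in> borel_measurable borel" by (rule borel_measurable_continuous_onI[OF fc])
  have gm[measurable]: "g \<in> borel_measurable borel" by (rule borel_measurable_continuous_onI[OF gc])
  define h where "h = (\<lambda>y. f0 y - f y)"
  define k where "k = (\<lambda>v. g v - g0 v)"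
  have hc: "continuous_on UNIV h" unfolding h_def by (intro continuous_on_diff f0c fc)
  have kc: "continuous_on UNIV k" unfolding k_def by (intro continuous_on_diff g0c gc)
  have hm[measurable]: "h \<in> borel_measurable borel" unfolding h_def by measurable
  have km[measurable]: "k \<in> borel_measurable borel" unfolding k_def by measurable
  have K: "AE x in N. h (M *v snd x + snd (fst x)) = k (snd (fst x))"
    using K2[OF fm gm H] unfolding h_def k_def .
  have ADx: "AE x in N. (snd (fst x), snd x) \<in> D"
    using AE_D[OF fr[unfolded S_def]] unfolding D_def S_def .
  have eqD: "\<And>v z. (v, z) \<in> D \<Longrightarrow> h (M *v z + v) = k v"
    using eq_on_D[OF hc kc hm km K] unfolding D_def S_def by blast
  define Lm where "Lm = (\<lambda>p::(real^'p) \<times> (real^'r). M *v snd p + fst p)"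
  have linLm: "linear Lm" unfolding Lm_def
    by (rule linearI) (simp_all add: matrix_vector_right_distrib matrix_vector_mult_scaleR algebra_simps)
  define Ob where "Ob = Lm ` D"
  have oD: "open D" unfolding D_def by simp
  have sLm: "surj Lm"
  proof -
    show ?thesis by (rule surjI[of Lm "\<lambda>x. (x, 0)"]) (simp add: Lm_def)
  qed
  have oOb: "open Ob" unfolding Ob_def by (rule open_surjective_linear_image[OF oD linLm sLm])
  have cOb: "convex Ob" unfolding Ob_def by (rule convex_linear_image[OF linLm cD])
  have loc: "\<forall>x\<in>Ob. \<exists>e>0. \<forall>w. norm w < e \<longrightarrow> h (x + M *v w) = h x"
  proof
    fix x assume "x \<in> Ob"
    then obtain v z where vz: "(v, z) \<in> D" and x: "x = M *v z + v" unfolding Ob_def Lm_def by auto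
    obtain e where e: "e > 0" "ball (v, z) e \<subseteq> D" using oD vz open_contains_ball by blast
    show "\<exists>e>0. \<forall>w. norm w < e \<longrightarrow> h (x + M *v w) = h x"
    proof (intro exI[of _ e] conjI allI impI e(1))
      fix w :: "real^'r" assume w: "norm w < e"
      have "dist (v, z) (v, z + w) = norm w" by (simp add: dist_Pair_Pair dist_norm)
      then have "(v, z + w) \<in> D" using e(2) w by (auto simp: ball_def)
      then have "h (M *v (z + w) + v) = k v" by (rule eqD)
      moreover have "h (M *v z + v) = k v" by (rule eqD[OF vz])
      moreover have "M *v (z + w) + v = x + M *v w" unfolding x by (simp add: matrix_vector_right_distrib algebra_simps)
      ultimately show "h (x + M *v w) = h x" unfolding x by simp
    qed
  qed
  have fib: "\<And>x1 d. x1 \<in> Ob \<Longrightarrow> x1 + M *v d \<in> Ob \<Longrightarrow> h (x1 + M *v d) = h x1"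
    by (rule const_on_line[OF cOb loc])
  have AEO: "AE x in N. M *v snd x + snd (fst x) \<in> Ob \<and> h (M *v snd x + snd (fst x)) = k (snd (fst x))"
    using ADx
  proof eventually_elim
    case (elim x)
    then show ?case using eqD[OF elim] unfolding Ob_def Lm_def by (auto intro!: image_eqI[of _ _ "(snd (fst x), snd x)"])
  qed
  show ?thesis
  proof (cases "rank M < CARD('p)")
    case True
    have sp: "span (columns R) = {v. transpose M *v v = 0}" and RtR: "transpose R ** R = mat 1"
      using vR True unfolding valid_R_def by auto
    define U' where "U' = (\<lambda>x. transpose R *v x) ` Ob"
    define \<psi>0 where "\<psi>0 = (\<lambda>y. h (SOME x. x \<in> Ob \<and> transpose R *v x = y))"
    define \<psi> where "\<psi> = (\<lambda>y. if y \<in> U' then \<psi>0 y else 0)"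
    have key: "\<And>x. x \<in> Ob \<Longrightarrow> \<psi>0 (transpose R *v x) = h x"
    proof -
      fix x assume xO: "x \<in> Ob"
      define x' where "x' = (SOME x'. x' \<in> Ob \<and> transpose R *v x' = transpose R *v x)"
      have x': "x' \<in> Ob \<and> transpose R *v x' = transpose R *v x"
        unfolding x'_def by (rule someI[of _ x]) (use xO in simp)
      then have "transpose R *v (x - x') = 0" by (simp add: matrix_vector_mult_diff_distrib)
      then obtain w where w: "x - x' = M *v w" using ker_in_range[OF sp] by blast
      then have xx: "x = x' + M *v w" by (simp add: algebra_simps)
      have "h (x' + M *v w) = h x'" by (rule fib) (use x' xO xx in auto)
      then show "\<psi>0 (transpose R *v x) = h x" unfolding \<psi>0_def x'_def[symmetric] using xx by simp
    qed
    have linRt: "linear (\<lambda>x. transpose R *v x)" by (rule matrix_vector_mul_linear)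
    have sRt: "surj (\<lambda>x. transpose R *v x)"
    proof -
      have "\<And>y. transpose R *v (R *v y) = y" using RtR by (simp add: matrix_vector_mul_assoc)
      then show ?thesis by (metis surjI)
    qed
    have oU': "open U'" unfolding U'_def by (rule open_surjective_linear_image[OF oOb linRt sRt])
    have cont: "continuous_on U' \<psi>0"
      unfolding continuous_on_open_vimage[OF oU']
    proof (intro allI impI)
      fix B :: "real set" assume oB: "open B"
      have "\<psi>0 -` B \<inter> U' = (\<lambda>x. transpose R *v x) ` (Ob \<inter> h -` B)"
      proof (intro set_eqI iffI)
        fix y assume "y \<in> \<psi>0 -` B \<inter> U'"
        then obtain x where "x \<in> Ob" "y = transpose R *v x" "\<psi>0 y \<in> B" unfolding U'_def by auto
        then show "y \<in> (\<lambda>x. transpose R *v x) ` (Ob \<inter> h -` B)" using key by auto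
      next
        fix y assume "y \<in> (\<lambda>x. transpose R *v x) ` (Ob \<inter> h -` B)"
        then obtain x where "x \<in> Ob" "h x \<in> B" "y = transpose R *v x" by auto
        then show "y \<in> \<psi>0 -` B \<inter> U'" using key unfolding U'_def by auto
      qed
      moreover have "open ((\<lambda>x. transpose R *v x) ` (Ob \<inter> h -` B))"
        by (rule open_surjective_linear_image[OF _ linRt sRt]) (intro open_Int oOb open_vim[OF hc oB])
      ultimately show "open (\<psi>0 -` B \<inter> U')" by simp
    qed
    have psim[measurable]: "\<psi> \<in> borel_measurable borel" unfolding \<psi>_def
      by (rule borel_measurable_continuous_on_if[OF _ cont continuous_on_const]) (use oU' in simp)
    have psiO: "\<And>x. x \<in> Ob \<Longrightarrow> \<psi> (transpose R *v x) = h x"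
      using key unfolding \<psi>_def U'_def by auto
    have H1: "AE x in N. f0 (M *v snd x + snd (fst x)) - f (M *v snd x + snd (fst x)) = \<psi> (transpose R *v (M *v snd x + snd (fst x)))"
      using AEO
    proof eventually_elim
      case (elim x)
      then show ?case using psiO[of "M *v snd x + snd (fst x)"] unfolding h_def by simp
    qed
    have H2: "AE x in N. g (snd (fst x)) - g0 (snd (fst x)) = \<psi> (transpose R *v (M *v snd x + snd (fst x)))"
      using AEO
    proof eventually_elim
      case (elim x)
      then show ?case using psiO[of "M *v snd x + snd (fst x)"] unfolding h_def k_def by simp
    qed
    have "AE w in P. fs (obsX w) = f (obsX w) + cond_exp_given P (\<lambda>w. transpose R *v obsX w) (\<lambda>w. g (obsV w)) w"
      by (rule Fin[OF fm gm psim BCF H1 H2])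
    then show ?thesis using True by simp
  next
    case False
    have R0: "R = 0" using vR False unfolding valid_R_def by simp
    have rf: "range (\<lambda>z. M *v z) = UNIV" by (rule range_full[OF False])
    define c where "c = h (SOME x. x \<in> Ob)"
    have hcst: "\<And>x. x \<in> Ob \<Longrightarrow> h x = c"
    proof -
      fix x assume xO: "x \<in> Ob"
      define x' where "x' = (SOME x. x \<in> Ob)"
      have x': "x' \<in> Ob" unfolding x'_def by (rule someI[of _ x]) (rule xO)
      obtain w where "x - x' = M *v w" using rf by (metis UNIV_I image_iff)
      then have xx: "x = x' + M *v w" by (simp add: algebra_simps)
      have "h (x' + M *v w) = h x'" by (rule fib) (use x' xO xx in auto)
      then show "h x = c" unfolding c_def x'_def[symmetric] using xx by simp
    qed
    have H1: "AE x in N. f0 (M *v snd x + snd (fst x)) - f (M *v snd x + snd (fst x)) = c"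
      using AEO
    proof eventually_elim
      case (elim x)
      then show ?case using hcst[of "M *v snd x + snd (fst x)"] unfolding h_def by simp
    qed
    have H2: "AE x in N. g (snd (fst x)) - g0 (snd (fst x)) = c"
      using AEO
    proof eventually_elim
      case (elim x)
      then show ?case using hcst[of "M *v snd x + snd (fst x)"] unfolding h_def k_def by simp
    qed
    have "AE w in P. fs (obsX w) = f (obsX w) + (\<integral>w'. g (obsV w') \<partial>P)"
      by (rule Fin_full[OF fm gm R0 BCF H1 H2])
    then show ?thesis using False by simp
  qed
qed

end




theorem proposition3:
  fixes f0 :: "real^'p::finite \<Rightarrow> real"
    and M0 :: "real^'r::finite^'p"
    and Lam :: "(real \<times> (real^'p)) measure"
    and Q0 :: "(real^'r) measure set"
    and Qtr :: "(real^'r) measure"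
    and g0 :: "real^'p \<Rightarrow> real"
    and R :: "real^'k::finite^'p"
    and fs :: "real^'p \<Rightarrow> real"
  assumes simdg: "is_SIMDG f0 M0 Lam Q0"
    and bdd: "(SUP Q\<in>Q0. \<integral>\<^sup>+ w. ennreal ((f0 (obsX w))\<^sup>2) \<partial>(induced_dist f0 M0 Lam Q)) < \<infinity>"
    and Qtr: "Qtr \<in> Q0"
    and Z_mean: "integrable Qtr (\<lambda>z. z)" "(\<integral>z. z \<partial>Qtr) = 0"
    and Z_mom: "integrable Qtr (\<lambda>z. norm z ^ 2)" "pos_def_matrix (second_moment_matrix Qtr)"
    and gamma0: "is_gamma0 (induced_dist f0 M0 Lam Qtr) g0"
    and R: "valid_R M0 R"
    and BCF: "is_BCF (induced_dist f0 M0 Lam Qtr) f0 g0 R fs"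
  shows "(condition_A (induced_dist f0 M0 Lam Qtr) M0 g0 \<longrightarrow>
            BCF_identifiable (induced_dist f0 M0 Lam Qtr) M0 R
              (borel_measurable borel) {g. linear g} fs)
       \<and> (condition_B (induced_dist f0 M0 Lam Qtr) f0 g0 \<longrightarrow>
            BCF_identifiable (induced_dist f0 M0 Lam Qtr) M0 R
              differentiable_fns differentiable_fns fs)"
proof -
  have f0m[measurable]: "f0 \<in> borel_measurable borel" and Lp: "prob_space Lam" and Ls: "sets Lam = sets borel"
    and Li: "integrable Lam (\<lambda>w. w)" and Qp: "prob_space Qtr" and Qs: "sets Qtr = sets borel"
    using simdg Qtr unfolding is_SIMDG_def by auto
  have Ps: "sets (induced_dist f0 M0 Lam Qtr) = sets borel" unfolding induced_dist_def by simp
  have fsq: "integrable (induced_dist f0 M0 Lam Qtr) (\<lambda>w. (f0 (obsX w))\<^sup>2)"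
  proof (rule integrableI_bounded)
    show "(\<lambda>w. (f0 (obsX w))\<^sup>2) \<in> borel_measurable (induced_dist f0 M0 Lam Qtr)"
    proof -
      have "(\<lambda>w. (f0 (obsX w))\<^sup>2) \<in> borel_measurable (borel :: ('p,'r) obs measure)" by measurable
      then show ?thesis unfolding measurable_cong_sets[OF Ps refl] .
    qed
    have "(\<integral>\<^sup>+ w. ennreal ((f0 (obsX w))\<^sup>2) \<partial>(induced_dist f0 M0 Lam Qtr)) \<le> (SUP Q\<in>Q0. \<integral>\<^sup>+ w. ennreal ((f0 (obsX w))\<^sup>2) \<partial>(induced_dist f0 M0 Lam Q))"
      by (rule SUP_upper[OF Qtr])
    then show "(\<integral>\<^sup>+ w. ennreal (norm ((f0 (obsX w))\<^sup>2)) \<partial>(induced_dist f0 M0 Lam Qtr)) < \<infinity>"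
      using bdd by simp
  qed
  interpret simsetup f0 M0 Lam Qtr g0
    by (rule simsetup.intro[OF f0m Lp Ls Li Qp Qs fsq gamma0])
  show ?thesis
  proof (intro conjI impI)
    assume A: "condition_A (induced_dist f0 M0 Lam Qtr) M0 g0"
    show "BCF_identifiable (induced_dist f0 M0 Lam Qtr) M0 R (borel_measurable borel) {g. linear g} fs"
      unfolding BCF_identifiable_def
    proof (intro ballI impI)
      fix f g assume fa: "f \<in> borel_measurable borel" and ga: "g \<in> {g. linear g}"
        and Ha: "AE w in induced_dist f0 M0 Lam Qtr. cond_exp_given (induced_dist f0 M0 Lam Qtr) (\<lambda>w. (obsX w, obsV w)) obsY w = f (obsX w) + g (obsV w)"
      have gl: "linear g" using ga by simp
      show "if rank M0 < CARD('p) then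
               (AE w in induced_dist f0 M0 Lam Qtr. fs (obsX w) = f (obsX w)
                  + cond_exp_given (induced_dist f0 M0 Lam Qtr) (\<lambda>w. transpose R *v obsX w) (\<lambda>w. g (obsV w)) w)
             else
               (AE w in induced_dist f0 M0 Lam Qtr. fs (obsX w) = f (obsX w) + (\<integral>w'. g (obsV w') \<partial>induced_dist f0 M0 Lam Qtr))"
        by (rule caseA[OF A fa gl Ha R BCF])
    qed
  next
    assume B: "condition_B (induced_dist f0 M0 Lam Qtr) f0 g0"
    show "BCF_identifiable (induced_dist f0 M0 Lam Qtr) M0 R differentiable_fns differentiable_fns fs"
      unfolding BCF_identifiable_def
    proof (intro ballI impI)
      fix f g assume fa: "f \<in> differentiable_fns" and ga: "g \<in> differentiable_fns"
        and Ha: "AE w in induced_dist f0 M0 Lam Qtr. cond_exp_given (induced_dist f0 M0 Lam Qtr) (\<lambda>w. (obsX w, obsV w)) obsY w = f (obsX w) + g (obsV w)"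
      show "if rank M0 < CARD('p) then
               (AE w in induced_dist f0 M0 Lam Qtr. fs (obsX w) = f (obsX w)
                  + cond_exp_given (induced_dist f0 M0 Lam Qtr) (\<lambda>w. transpose R *v obsX w) (\<lambda>w. g (obsV w)) w)
             else
               (AE w in induced_dist f0 M0 Lam Qtr. fs (obsX w) = f (obsX w) + (\<integral>w'. g (obsV w') \<partial>induced_dist f0 M0 Lam Qtr))"
        by (rule caseB[OF B fa ga Ha R BCF])
    qed
  qed
qed

end
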